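(* Let $G$ be a group, $N$ a normal subgroup of $G$, and $S=\bigoplus_{g\in G}S_g$ a virtually epsilon-strongly $G$-graded ring where, for each $g\in G$, $M_g$ is a set of commuting orthogonal idempotents such that $E_g=\bigvee M_g$ is a set of local units for $S_gS_{g^{-1}}$. For each $C\in G/N$ put $A_C=\bigvee_{g\in C}M_g$ and assume: (a) for all $g,h\in C$ and $e\in M_g$, $f\in M_h$ we have $ef=fe$; (b) the maximal elements of $(A_C,\le)$ are pairwise orthogonal idempotents; (c) every chain in the poset $(A_C,\le)$ is finite. Then the induced $G/N$-grading $\{S_C\}_{C\in G/N}$ is virtually epsilon-strong.
   Context: Rings are associative, not necessarily unital; $AB$ denotes finite sums of products. A $G$-grading: $S=\bigoplus_gS_g$, $S_gS_h\subseteq S_{gh}$. Induced grading: $S_C=\bigoplus_{g\in C}S_g$. Idempotents are ordered by $a\le b$ iff $a=ab=ba$; $\vee$ is the least upper bound (for commuting idempotents $a\vee b=a+b-ab$); for a family $\{M_i\}$, $\bigvee_iM_i$ is the set of finite joins of elements of $\bigcup_iM_i$. A set of local units for a ring $R$ is a $\vee$-closed set of pairwise commuting idempotents of $R$ such that every $r\in R$ has some $f$ in it with $fr=rf=r$. A grading $\{T_h\}_{h\in H}$ is virtually epsilon-strong if $T_hT_{h^{-1}}T_h=T_h$ for all $h$ and each ring $T_hT_{h^{-1}}$ has enough idempotents: a set of pairwise orthogonal commuting idempotents of that ring whose $\vee$-closure is a set of local units for it. *)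

theory Defs
  imports "HOL-Algebra.Coset"
begin

definition set_prod :: "'a::ring set \<Rightarrow> 'a set \<Rightarrow> 'a set" where
  "set_prod A B = {sum_list (map (\<lambda>(a, b). a * b) xs) | xs. set xs \<subseteq> A \<times> B}"

definition idem :: "'a::ring \<Rightarrow> bool" where
  "idem e \<longleftrightarrow> e * e = e"

definition idem_le :: "'a::ring \<Rightarrow> 'a \<Rightarrow> bool" where
  "idem_le a b \<longleftrightarrow> a = a * b \<and> a = b * a"

text \<open>Join of commuting idempotents (their least upper bound).\<close>
definition idem_join :: "'a::ring \<Rightarrow> 'a \<Rightarrow> 'a" where
  "idem_join a b = a + b - a * b"

inductive_set join_closure :: "'a::ring set \<Rightarrow> 'a set" for M where
  base: "m \<in> M \<Longrightarrow> m \<in> join_closure M"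
| join: "a \<in> join_closure M \<Longrightarrow> b \<in> join_closure M \<Longrightarrow> idem_join a b \<in> join_closure M"

definition local_units :: "'a::ring set \<Rightarrow> 'a set \<Rightarrow> bool" where
  "local_units E R \<longleftrightarrow> E \<subseteq> R \<and> (\<forall>e\<in>E. idem e) \<and> (\<forall>a\<in>E. \<forall>b\<in>E. a * b = b * a)
     \<and> (\<forall>a\<in>E. \<forall>b\<in>E. idem_join a b \<in> E)
     \<and> (\<forall>r\<in>R. \<exists>f\<in>E. f * r = r \<and> r * f = r)"

definition comm_orth_idems :: "'a::ring set \<Rightarrow> bool" where
  "comm_orth_idems M \<longleftrightarrow> (\<forall>e\<in>M. idem e) \<and> (\<forall>a\<in>M. \<forall>b\<in>M. a * b = b * a)
     \<and> (\<forall>a\<in>M. \<forall>b\<in>M. a \<noteq> b \<longrightarrow> a * b = 0)"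

definition enough_idempotents :: "'a::ring set \<Rightarrow> bool" where
  "enough_idempotents R \<longleftrightarrow>
     (\<exists>M. M \<subseteq> R \<and> comm_orth_idems M \<and> local_units (join_closure M) R)"

definition add_subgroup :: "'a::ring set \<Rightarrow> bool" where
  "add_subgroup A \<longleftrightarrow> 0 \<in> A \<and> (\<forall>x\<in>A. \<forall>y\<in>A. x - y \<in> A)"

definition is_grading :: "('g, 'b) monoid_scheme \<Rightarrow> ('g \<Rightarrow> 'a::ring set) \<Rightarrow> bool" where
  "is_grading H T \<longleftrightarrow>
     (\<forall>h\<in>carrier H. add_subgroup (T h))
   \<and> (\<forall>g\<in>carrier H. \<forall>h\<in>carrier H. set_prod (T g) (T h) \<subseteq> T (g \<otimes>\<^bsub>H\<^esub> h))
   \<and> (\<forall>s. \<exists>!f. finite {h. f h \<noteq> 0} \<and> {h. f h \<noteq> 0} \<subseteq> carrier H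
              \<and> (\<forall>h\<in>carrier H. f h \<in> T h) \<and> s = sum f {h. f h \<noteq> 0})"

definition virtually_eps_strong :: "('g, 'b) monoid_scheme \<Rightarrow> ('g \<Rightarrow> 'a::ring set) \<Rightarrow> bool" where
  "virtually_eps_strong H T \<longleftrightarrow>
     (\<forall>h\<in>carrier H. set_prod (set_prod (T h) (T (inv\<^bsub>H\<^esub> h))) (T h) = T h
        \<and> enough_idempotents (set_prod (T h) (T (inv\<^bsub>H\<^esub> h))))"

definition induced :: "('g \<Rightarrow> 'a::ring set) \<Rightarrow> 'g set \<Rightarrow> 'a set" where
  "induced T C = {sum f F | F f. finite F \<and> F \<subseteq> C \<and> (\<forall>g\<in>F. f g \<in> T g)}"

end

theory Submission
  imports Defs
begin


lemma coset_facts: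
  assumes G: "group G" and N: "N \<lhd> G" and C: "C \<in> carrier (G Mod N)"
  shows "C \<subseteq> carrier G" "inv\<^bsub>G Mod N\<^esub> C \<subseteq> carrier G" "C \<noteq> {}"
    "inv\<^bsub>G Mod N\<^esub> C = set_inv\<^bsub>G\<^esub> C"
    "(C <#>\<^bsub>G\<^esub> inv\<^bsub>G Mod N\<^esub> C) <#>\<^bsub>G\<^esub> C = C"
    "inv\<^bsub>G Mod N\<^esub> C <#>\<^bsub>G\<^esub> (C <#>\<^bsub>G\<^esub> inv\<^bsub>G Mod N\<^esub> C) = inv\<^bsub>G Mod N\<^esub> C"
    "C <#>\<^bsub>G\<^esub> inv\<^bsub>G Mod N\<^esub> C \<subseteq> carrier G"
proof -
  interpret normal N G by (rule N)
  interpret F: group "G Mod N" by (rule factorgroup_is_group)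
  have ic: "inv\<^bsub>G Mod N\<^esub> C \<in> carrier (G Mod N)" using C by simp
  have rc: "\<And>X. X \<in> carrier (G Mod N) \<Longrightarrow> X \<subseteq> carrier G"
    using rcosets_carrier[OF G] by (auto simp: FactGroup_def)
  show "C \<subseteq> carrier G" using rc C .
  show "inv\<^bsub>G Mod N\<^esub> C \<subseteq> carrier G" using rc ic .
  show "C \<noteq> {}" using C rcos_self[OF _ is_subgroup] by (auto simp: FactGroup_def RCOSETS_def)
  show "inv\<^bsub>G Mod N\<^esub> C = set_inv\<^bsub>G\<^esub> C" using C inv_FactGroup by (simp add: FactGroup_def)
  have "(C \<otimes>\<^bsub>G Mod N\<^esub> inv\<^bsub>G Mod N\<^esub> C) \<otimes>\<^bsub>G Mod N\<^esub> C = C"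
    using C ic by (simp del: mult_FactGroup one_FactGroup add: F.m_assoc)
  then show "(C <#>\<^bsub>G\<^esub> inv\<^bsub>G Mod N\<^esub> C) <#>\<^bsub>G\<^esub> C = C" by simp
  have "inv\<^bsub>G Mod N\<^esub> C \<otimes>\<^bsub>G Mod N\<^esub> (C \<otimes>\<^bsub>G Mod N\<^esub> inv\<^bsub>G Mod N\<^esub> C) = inv\<^bsub>G Mod N\<^esub> C"
    using C ic by (simp del: mult_FactGroup one_FactGroup add: F.m_assoc[symmetric])
  then show "inv\<^bsub>G Mod N\<^esub> C <#>\<^bsub>G\<^esub> (C <#>\<^bsub>G\<^esub> inv\<^bsub>G Mod N\<^esub> C) = inv\<^bsub>G Mod N\<^esub> C" by simp
  have "C \<otimes>\<^bsub>G Mod N\<^esub> inv\<^bsub>G Mod N\<^esub> C \<in> carrier (G Mod N)" by (rule F.m_closed[OF C ic])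
  then show "C <#>\<^bsub>G\<^esub> inv\<^bsub>G Mod N\<^esub> C \<subseteq> carrier G" using rc by simp
qed



lemma set_prod_induct[consumes 1, case_names zero prod add]:
  assumes "x \<in> set_prod A B" "P 0" "\<And>a b. a\<in>A \<Longrightarrow> b\<in>B \<Longrightarrow> P (a*b)"
    "\<And>x y. P x \<Longrightarrow> P y \<Longrightarrow> P (x+y)"
  shows "P x"
proof -
  obtain xs where xs: "x = sum_list (map (\<lambda>(a,b). a*b) xs)" "set xs \<subseteq> A \<times> B"
    using assms(1) unfolding set_prod_def by auto
  have "P (sum_list (map (\<lambda>(a,b). a*b) xs))" using xs(2)
    by (induction xs) (auto intro: assms(2-4))
  then show ?thesis using xs(1) by simp
qed

lemma set_prod_zero: "0 \<in> set_prod A B"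
  unfolding set_prod_def by (rule CollectI, rule exI[of _ "[]"]) simp

lemma set_prod_prod: "a \<in> A \<Longrightarrow> b \<in> B \<Longrightarrow> a * b \<in> set_prod A B"
  unfolding set_prod_def by (rule CollectI, rule exI[of _ "[(a,b)]"]) simp

lemma set_prod_add: "x \<in> set_prod A B \<Longrightarrow> y \<in> set_prod A B \<Longrightarrow> x + y \<in> set_prod A B"
proof -
  assume "x \<in> set_prod A B" "y \<in> set_prod A B"
  then obtain xs ys where "x = sum_list (map (\<lambda>(a,b). a*b) xs)" "set xs \<subseteq> A \<times> B"
    "y = sum_list (map (\<lambda>(a,b). a*b) ys)" "set ys \<subseteq> A \<times> B"
    unfolding set_prod_def by auto
  then show ?thesis unfolding set_prod_def by (intro CollectI exI[of _ "xs @ ys"]) auto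
qed

lemma set_prod_subset:
  assumes "0 \<in> X" "\<And>x y. x \<in> X \<Longrightarrow> y \<in> X \<Longrightarrow> x + y \<in> X" "\<And>a b. a\<in>A \<Longrightarrow> b\<in>B \<Longrightarrow> a*b \<in> X"
  shows "set_prod A B \<subseteq> X"
  using assms by (auto elim: set_prod_induct)

lemma set_prod_mono: "A \<subseteq> A' \<Longrightarrow> B \<subseteq> B' \<Longrightarrow> set_prod A B \<subseteq> set_prod A' B'"
  by (rule set_prod_subset) (auto intro: set_prod_zero set_prod_add set_prod_prod)

lemma set_prod_uminus:
  assumes "\<And>a. a \<in> A \<Longrightarrow> -a \<in> A" "x \<in> set_prod A B"
  shows "-x \<in> set_prod A B"
  using assms(2)
proof (induction rule: set_prod_induct)
  case zero then show ?case by (simp add: set_prod_zero)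
next
  case (prod a b)
  then have "(-a) * b \<in> set_prod A B" using assms(1) by (intro set_prod_prod)
  then show ?case by simp
next
  case (add x y) then show ?case using set_prod_add[of "-x" A B "-y"] by (simp add: add.commute)
qed

lemma add_subgroup_add: "add_subgroup A \<Longrightarrow> x \<in> A \<Longrightarrow> y \<in> A \<Longrightarrow> x + y \<in> A"
  unfolding add_subgroup_def by (metis diff_0 diff_minus_eq_add)

lemma add_subgroup_uminus: "add_subgroup A \<Longrightarrow> x \<in> A \<Longrightarrow> - x \<in> A"
  unfolding add_subgroup_def by (metis diff_0)

lemma add_subgroup_zero: "add_subgroup A \<Longrightarrow> 0 \<in> A"
  unfolding add_subgroup_def by blast

lemma induced_induct[consumes 1, case_names zero elem add]:
  assumes "x \<in> induced S C" "P 0" "\<And>g s. g \<in> C \<Longrightarrow> s \<in> S g \<Longrightarrow> P s"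
    "\<And>x y. P x \<Longrightarrow> P y \<Longrightarrow> P (x+y)"
  shows "P x"
proof -
  obtain F f where Ff: "x = sum f F" "finite F" "F \<subseteq> C" "\<forall>g\<in>F. f g \<in> S g"
    using assms(1) unfolding induced_def by auto
  have "P (sum f F)" using Ff(2-4)
    by (induction F rule: finite_induct) (auto intro: assms(2-4))
  then show ?thesis using Ff(1) by simp
qed

lemma induced_elem: "g \<in> C \<Longrightarrow> s \<in> S g \<Longrightarrow> s \<in> induced S C"
  unfolding induced_def by (intro CollectI exI[of _ "{g}"] exI[of _ "\<lambda>_. s"]) auto

lemma induced_zero: "0 \<in> induced S C"
  unfolding induced_def by (intro CollectI exI[of _ "{}"]) auto

lemma induced_add:
  assumes sg: "\<And>g. g \<in> C \<Longrightarrow> add_subgroup (S g)"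
    and x: "x \<in> induced S C" and y: "y \<in> induced S C"
  shows "x + y \<in> induced S C"
proof -
  obtain F f where F: "x = sum f F" "finite F" "F \<subseteq> C" "\<forall>g\<in>F. f g \<in> S g"
    using x unfolding induced_def by auto
  obtain F' f' where F': "y = sum f' F'" "finite F'" "F' \<subseteq> C" "\<forall>g\<in>F'. f' g \<in> S g"
    using y unfolding induced_def by auto
  define f1 where "f1 g = (if g \<in> F then f g else 0)" for g
  define f2 where "f2 g = (if g \<in> F' then f' g else 0)" for g
  have "x = sum f1 (F \<union> F')"
    unfolding F(1) f1_def using F(2) F'(2) by (simp add: sum.If_cases Int_absorb2)
  moreover have "y = sum f2 (F \<union> F')"
    unfolding F'(1) f2_def using F(2) F'(2) by (simp add: sum.If_cases Int_absorb2)
  ultimately have "x + y = sum (\<lambda>g. f1 g + f2 g) (F \<union> F')" by (simp add: sum.distrib)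
  moreover have "\<forall>g\<in>F \<union> F'. f1 g + f2 g \<in> S g"
    using F F' sg unfolding f1_def f2_def
    by (auto intro!: add_subgroup_add add_subgroup_zero)
  ultimately show ?thesis unfolding induced_def using F F'
    by (intro CollectI exI[of _ "F \<union> F'"] exI[of _ "\<lambda>g. f1 g + f2 g"]) auto
qed

lemma induced_uminus:
  assumes sg: "\<And>g. g \<in> C \<Longrightarrow> add_subgroup (S g)" and x: "x \<in> induced S C"
  shows "- x \<in> induced S C"
proof -
  obtain F f where F: "x = sum f F" "finite F" "F \<subseteq> C" "\<forall>g\<in>F. f g \<in> S g"
    using x unfolding induced_def by auto
  show ?thesis unfolding induced_def using F sg
    by (intro CollectI exI[of _ F] exI[of _ "\<lambda>g. - f g"]) (auto simp: sum_negf intro: add_subgroup_uminus)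
qed

lemma induced_subset:
  assumes "0 \<in> X" "\<And>x y. x \<in> X \<Longrightarrow> y \<in> X \<Longrightarrow> x + y \<in> X" "\<And>g. g \<in> C \<Longrightarrow> S g \<subseteq> X"
  shows "induced S C \<subseteq> X"
proof
  fix x assume "x \<in> induced S C"
  then show "x \<in> X" by (induction rule: induced_induct) (use assms in auto)
qed

lemma induced_mult:
  assumes sg: "\<And>g. g \<in> carrier G \<Longrightarrow> add_subgroup (S g)"
    and pr: "\<And>g h. g \<in> carrier G \<Longrightarrow> h \<in> carrier G \<Longrightarrow> set_prod (S g) (S h) \<subseteq> S (g \<otimes>\<^bsub>G\<^esub> h)"
    and C: "C \<subseteq> carrier G" and D: "D \<subseteq> carrier G" and CD: "C <#>\<^bsub>G\<^esub> D \<subseteq> carrier G"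
    and x: "x \<in> induced S C" and y: "y \<in> induced S D"
  shows "x * y \<in> induced S (C <#>\<^bsub>G\<^esub> D)"
  using x
proof (induction rule: induced_induct)
  case zero then show ?case by (simp add: induced_zero)
next
  case (add x1 x2) then show ?case
    unfolding distrib_right by (intro induced_add[of _ S]) (use sg CD in auto)
next
  case (elem g s)
  show ?case using y
  proof (induction rule: induced_induct)
    case zero then show ?case by (simp add: induced_zero)
  next
    case (add y1 y2) then show ?case
      unfolding distrib_left by (intro induced_add[of _ S]) (use sg CD in auto)
  next
    case (elem h t)
    have "s * t \<in> S (g \<otimes>\<^bsub>G\<^esub> h)" using pr[of g h] set_prod_prod[OF \<open>s \<in> S g\<close> elem(2)]
        \<open>g \<in> C\<close> elem(1) C D by auto
    moreover have "g \<otimes>\<^bsub>G\<^esub> h \<in> C <#>\<^bsub>G\<^esub> D" using \<open>g \<in> C\<close> elem(1) unfolding set_mult_def by blast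
    ultimately show ?case by (rule induced_elem[rotated])
  qed
qed



lemma jc_mono: "X \<subseteq> Y \<Longrightarrow> join_closure X \<subseteq> join_closure Y"
proof
  fix x assume XY: "X \<subseteq> Y" and "x \<in> join_closure X"
  from \<open>x \<in> join_closure X\<close> show "x \<in> join_closure Y" by (induction rule: join_closure.induct) (use XY in \<open>auto intro: join_closure.intros\<close>)
qed

lemma jc_closed: "X \<subseteq> R \<Longrightarrow> (\<And>a b. a \<in> R \<Longrightarrow> b \<in> R \<Longrightarrow> idem_join a b \<in> R) \<Longrightarrow> join_closure X \<subseteq> R"
proof
  fix x assume A: "X \<subseteq> R" "\<And>a b. a \<in> R \<Longrightarrow> b \<in> R \<Longrightarrow> idem_join a b \<in> R" and "x \<in> join_closure X"
  from \<open>x \<in> join_closure X\<close> show "x \<in> R" by (induction rule: join_closure.induct) (use A in auto)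
qed

lemma jc_commute_ext:
  fixes y :: "'a::ring"
  assumes "\<forall>m\<in>X. y*m = m*y" "x \<in> join_closure X"
  shows "y*x = x*y"
  using assms(2)
proof (induction rule: join_closure.induct)
  case (base m) then show ?case using assms(1) by auto
next
  case (join a b)
  have "y * (a*b) = (a*b)*y" using join by (metis mult.assoc)
  then show ?case using join unfolding idem_join_def by (simp add: algebra_simps)
qed

lemma jc_comm:
  fixes X :: "'a::ring set"
  assumes "\<forall>a\<in>X. \<forall>b\<in>X. a*b = b*a" "a \<in> join_closure X" "b \<in> join_closure X"
  shows "a*b = b*a"
proof -
  have "\<forall>m\<in>X. a*m = m*a" using assms(1,2) jc_commute_ext[of X _ a] by metis
  then show ?thesis using jc_commute_ext[OF _ assms(3)] by metis
qed

lemma idem_join_idem: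
  fixes a b :: "'a::ring"
  assumes "idem a" "idem b" "a*b = b*a"
  shows "idem (idem_join a b)"
proof -
  have aa: "a*a = a" and bb: "b*b = b" using assms unfolding idem_def by auto
  have 1: "a*(a*b) = a*b" by (metis aa mult.assoc)
  have 2: "b*(a*b) = a*b" by (metis bb assms(3) mult.assoc)
  have 3: "a*(b*a) = a*b" using 1 assms(3) by simp
  have 4: "a*(b*b) = a*b" using bb by simp
  have 5: "a*(b*(a*b)) = a*b" using 2 1 by simp
  show ?thesis unfolding idem_def idem_join_def
    by (simp add: algebra_simps aa bb 1 2 3 4 5 assms(3)[symmetric] mult.assoc)
qed

lemma jc_idem:
  fixes X :: "'a::ring set"
  assumes "\<forall>a\<in>X. \<forall>b\<in>X. a*b = b*a" "\<forall>a\<in>X. idem a" "x \<in> join_closure X"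
  shows "idem x"
  using assms(3)
proof (induction rule: join_closure.induct)
  case (base m) then show ?case using assms by auto
next
  case (join a b) then show ?case using idem_join_idem jc_comm[OF assms(1)] by blast
qed

lemma join_lunit: "(u1::'a::ring)*u2 = u2*u1 \<Longrightarrow> u1*x = x \<Longrightarrow> idem_join u1 u2 * x = x \<and> idem_join u2 u1 * x = x"
  unfolding idem_join_def by (auto simp: algebra_simps; metis mult.assoc)

lemma join_runit: "(u1::'a::ring)*u2 = u2*u1 \<Longrightarrow> x*u1 = x \<Longrightarrow> x * idem_join u1 u2 = x \<and> x * idem_join u2 u1 = x"
  unfolding idem_join_def by (auto simp: algebra_simps; metis mult.assoc)

lemma idem_le_trans: "idem_le (a::'a::ring) b \<Longrightarrow> idem_le b c \<Longrightarrow> idem_le a c"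
  unfolding idem_le_def by (metis mult.assoc)

lemma idem_le_antisym: "idem_le (a::'a::ring) b \<Longrightarrow> idem_le b a \<Longrightarrow> a = b"
  unfolding idem_le_def by metis

lemma idem_le_refl: "idem (a::'a::ring) \<Longrightarrow> idem_le a a"
  unfolding idem_le_def idem_def by metis



lemma exists_maximal:
  fixes A :: "'a::ring set"
  assumes idem: "\<forall>a\<in>A. idem a"
    and chains: "\<And>Ch. Ch \<subseteq> A \<Longrightarrow> (\<forall>x\<in>Ch. \<forall>y\<in>Ch. idem_le x y \<or> idem_le y x) \<Longrightarrow> finite Ch"
    and u: "u \<in> A"
  shows "\<exists>m\<in>A. idem_le u m \<and> (\<forall>z\<in>A. idem_le m z \<longrightarrow> z = m)"
proof -
  define r where "r = {(y,x). x\<in>A \<and> y\<in>A \<and> idem_le x y \<and> x \<noteq> y}"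
  have "wf r"
    unfolding wf_iff_no_infinite_down_chain
  proof
    assume "\<exists>f. \<forall>i. (f (Suc i), f i) \<in> r"
    then obtain f where f: "\<And>i. (f (Suc i), f i) \<in> r" by blast
    have fA: "f i \<in> A" for i using f[of i] unfolding r_def by auto
    have lt: "i < j \<longrightarrow> idem_le (f i) (f j) \<and> f i \<noteq> f j" for i j
    proof (induction j)
      case 0 then show ?case by simp
    next
      case (Suc k)
      have s: "idem_le (f k) (f (Suc k))" "f k \<noteq> f (Suc k)" using f[of k] unfolding r_def by auto
      show ?case
      proof
        assume "i < Suc k"
        then consider "i = k" | "i < k" by linarith
        then show "idem_le (f i) (f (Suc k)) \<and> f i \<noteq> f (Suc k)"
        proof cases
          case 1 then show ?thesis using s by simp
        next
          case 2
          then have h: "idem_le (f i) (f k)" "f i \<noteq> f k" using Suc by auto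
          have "idem_le (f i) (f (Suc k))" using idem_le_trans[OF h(1) s(1)] .
          moreover have "f i \<noteq> f (Suc k)"
          proof
            assume "f i = f (Suc k)"
            then have "idem_le (f k) (f i)" using s by simp
            then show False using h idem_le_antisym by metis
          qed
          ultimately show ?thesis by simp
        qed
      qed
    qed
    have "inj f"
    proof (rule injI)
      fix i j assume "f i = f j"
      then show "i = j" using lt[of i j] lt[of j i] by (metis linorder_neqE_nat)
    qed
    then have inf: "infinite (range f)" using finite_imageD[of f UNIV] by auto
    have "finite (range f)"
    proof (rule chains)
      show "range f \<subseteq> A" using fA by auto
      show "\<forall>x\<in>range f. \<forall>y\<in>range f. idem_le x y \<or> idem_le y x"
      proof (intro ballI)
        fix x y assume "x \<in> range f" "y \<in> range f"
        then obtain i j where ij: "x = f i" "y = f j" by auto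
        have "idem_le (f i) (f j) \<or> idem_le (f j) (f i)"
          using lt[of i j] lt[of j i] idem_le_refl[of "f i"] idem fA
          by (metis linorder_neqE_nat)
        then show "idem_le x y \<or> idem_le y x" using ij by simp
      qed
    qed
    with inf show False by simp
  qed
  have "x \<in> A \<longrightarrow> (\<exists>m\<in>A. idem_le x m \<and> (\<forall>z\<in>A. idem_le m z \<longrightarrow> z = m))" for x
  proof (induction x rule: wf_induct[OF \<open>wf r\<close>], intro impI)
    fix x assume IH: "\<forall>y. (y, x) \<in> r \<longrightarrow> y \<in> A \<longrightarrow> (\<exists>m\<in>A. idem_le y m \<and> (\<forall>z\<in>A. idem_le m z \<longrightarrow> z = m))"
      and x: "x \<in> A"
    show "\<exists>m\<in>A. idem_le x m \<and> (\<forall>z\<in>A. idem_le m z \<longrightarrow> z = m)"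
    proof (cases "\<forall>z\<in>A. idem_le x z \<longrightarrow> z = x")
      case True then show ?thesis using x idem_le_refl idem by blast
    next
      case False
      then obtain z where z: "z \<in> A" "idem_le x z" "z \<noteq> x" by blast
      then have "(z, x) \<in> r" using x unfolding r_def by auto
      then obtain m where "m \<in> A" "idem_le z m" "\<forall>w\<in>A. idem_le m w \<longrightarrow> w = m" using IH z by blast
      then show ?thesis using idem_le_trans[OF z(2)] by blast
    qed
  qed
  then show ?thesis using u by blast
qed



theorem proposition5p13:
  fixes G :: "('g, 'b) monoid_scheme" and N :: "'g set"
    and S :: "'g \<Rightarrow> 'a::ring set" and M :: "'g \<Rightarrow> 'a set"
  assumes "group G" and "N \<lhd> G"
    and "is_grading G S" and "virtually_eps_strong G S"
    and "\<And>g. g \<in> carrier G \<Longrightarrow> comm_orth_idems (M g)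
            \<and> local_units (join_closure (M g)) (set_prod (S g) (S (inv\<^bsub>G\<^esub> g)))"
    and a: "\<And>C g h e f. C \<in> carrier (G Mod N) \<Longrightarrow> g \<in> C \<Longrightarrow> h \<in> C
            \<Longrightarrow> e \<in> M g \<Longrightarrow> f \<in> M h \<Longrightarrow> e * f = f * e"
    and b: "\<And>C x y. C \<in> carrier (G Mod N) \<Longrightarrow>
            x \<in> join_closure (\<Union>g\<in>C. M g) \<Longrightarrow>
            (\<forall>z\<in>join_closure (\<Union>g\<in>C. M g). idem_le x z \<longrightarrow> z = x) \<Longrightarrow>
            y \<in> join_closure (\<Union>g\<in>C. M g) \<Longrightarrow>
            (\<forall>z\<in>join_closure (\<Union>g\<in>C. M g). idem_le y z \<longrightarrow> z = y) \<Longrightarrow>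
            x \<noteq> y \<Longrightarrow> idem x \<and> idem y \<and> x * y = 0 \<and> y * x = 0"
    and c: "\<And>C Ch. C \<in> carrier (G Mod N) \<Longrightarrow> Ch \<subseteq> join_closure (\<Union>g\<in>C. M g) \<Longrightarrow>
            (\<forall>x\<in>Ch. \<forall>y\<in>Ch. idem_le x y \<or> idem_le y x) \<Longrightarrow> finite Ch"
  shows "virtually_eps_strong (G Mod N) (induced S)"
proof -
  interpret G: group G by fact
  have sg: "\<And>h. h \<in> carrier G \<Longrightarrow> add_subgroup (S h)"
    and pr: "\<And>g h. g \<in> carrier G \<Longrightarrow> h \<in> carrier G \<Longrightarrow> set_prod (S g) (S h) \<subseteq> S (g \<otimes>\<^bsub>G\<^esub> h)"
  proof -
    have "(\<forall>h\<in>carrier G. add_subgroup (S h))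
       \<and> (\<forall>g\<in>carrier G. \<forall>h\<in>carrier G. set_prod (S g) (S h) \<subseteq> S (g \<otimes>\<^bsub>G\<^esub> h))"
      using assms(3) unfolding is_grading_def by (elim conjE) (intro conjI; assumption)
    then show "\<And>h. h \<in> carrier G \<Longrightarrow> add_subgroup (S h)"
      "\<And>g h. g \<in> carrier G \<Longrightarrow> h \<in> carrier G \<Longrightarrow> set_prod (S g) (S h) \<subseteq> S (g \<otimes>\<^bsub>G\<^esub> h)"
      by auto
  qed
  have ves: "\<And>h. h \<in> carrier G \<Longrightarrow> set_prod (set_prod (S h) (S (inv\<^bsub>G\<^esub> h))) (S h) = S h"
    using assms(4) unfolding virtually_eps_strong_def by auto
  have coi: "\<And>g. g \<in> carrier G \<Longrightarrow> comm_orth_idems (M g)"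
    and lu: "\<And>g. g \<in> carrier G \<Longrightarrow> local_units (join_closure (M g)) (set_prod (S g) (S (inv\<^bsub>G\<^esub> g)))"
    using assms(5) by auto
  show ?thesis unfolding virtually_eps_strong_def
  proof (intro ballI)
    fix C assume C: "C \<in> carrier (G Mod N)"
    define C' where "C' = inv\<^bsub>G Mod N\<^esub> C"
    note cf = coset_facts[OF assms(1,2) C, folded C'_def]
    define SC where "SC = induced S C"
    define SC' where "SC' = induced S C'"
    define R where "R = set_prod SC SC'"
    have Cc: "C \<subseteq> carrier G" and C'c: "C' \<subseteq> carrier G" using cf by auto
    have invC: "\<And>g. g \<in> C \<Longrightarrow> inv\<^bsub>G\<^esub> g \<in> C'" using cf(4) unfolding SET_INV_def by auto
    have invC': "\<And>h'. h' \<in> C' \<Longrightarrow> \<exists>h\<in>C. h' = inv\<^bsub>G\<^esub> h" using cf(4) unfolding SET_INV_def by auto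
    have sgC: "\<And>g. g \<in> C \<Longrightarrow> add_subgroup (S g)" using sg Cc by auto
    have sgC': "\<And>g. g \<in> C' \<Longrightarrow> add_subgroup (S g)" using sg C'c by auto
    have sgCC': "\<And>g. g \<in> C <#>\<^bsub>G\<^esub> C' \<Longrightarrow> add_subgroup (S g)" using sg cf(7) by auto
    have SC_add: "\<And>x y. x \<in> SC \<Longrightarrow> y \<in> SC \<Longrightarrow> x + y \<in> SC"
      unfolding SC_def by (rule induced_add[OF sgC])
    have SC_uminus: "\<And>x. x \<in> SC \<Longrightarrow> - x \<in> SC"
      unfolding SC_def by (rule induced_uminus[OF sgC])
    have m1: "\<And>x y. x \<in> SC \<Longrightarrow> y \<in> SC' \<Longrightarrow> x * y \<in> induced S (C <#>\<^bsub>G\<^esub> C')"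
      unfolding SC_def SC'_def by (rule induced_mult[OF sg pr Cc C'c cf(7)])
    have m2: "\<And>x y. x \<in> induced S (C <#>\<^bsub>G\<^esub> C') \<Longrightarrow> y \<in> SC \<Longrightarrow> x * y \<in> SC"
    proof -
      fix x y assume xy: "x \<in> induced S (C <#>\<^bsub>G\<^esub> C')" "y \<in> SC"
      have cc: "(C <#>\<^bsub>G\<^esub> C') <#>\<^bsub>G\<^esub> C \<subseteq> carrier G" using cf(5) Cc by simp
      have "x * y \<in> induced S ((C <#>\<^bsub>G\<^esub> C') <#>\<^bsub>G\<^esub> C)"
        using xy unfolding SC_def by (intro induced_mult[OF sg pr cf(7) Cc cc])
      then show "x * y \<in> SC" unfolding SC_def by (simp only: cf(5))
    qed
    have m3: "\<And>x y. y \<in> SC' \<Longrightarrow> x \<in> induced S (C <#>\<^bsub>G\<^esub> C') \<Longrightarrow> y * x \<in> SC'"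
    proof -
      fix x y assume xy: "y \<in> SC'" "x \<in> induced S (C <#>\<^bsub>G\<^esub> C')"
      have cc: "C' <#>\<^bsub>G\<^esub> (C <#>\<^bsub>G\<^esub> C') \<subseteq> carrier G" using cf(6) C'c by simp
      have "y * x \<in> induced S (C' <#>\<^bsub>G\<^esub> (C <#>\<^bsub>G\<^esub> C'))"
        using xy unfolding SC'_def by (intro induced_mult[OF sg pr C'c cf(7) cc])
      then show "y * x \<in> SC'" unfolding SC'_def by (simp only: cf(6))
    qed
    have RCC: "R \<subseteq> induced S (C <#>\<^bsub>G\<^esub> C')"
      unfolding R_def
    proof (rule set_prod_subset)
      show "0 \<in> induced S (C <#>\<^bsub>G\<^esub> C')" by (rule induced_zero)
      show "\<And>x y. x \<in> induced S (C <#>\<^bsub>G\<^esub> C') \<Longrightarrow> y \<in> induced S (C <#>\<^bsub>G\<^esub> C') \<Longrightarrow> x + y \<in> induced S (C <#>\<^bsub>G\<^esub> C')"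
        by (rule induced_add[OF sgCC'])
      show "\<And>a b. a \<in> SC \<Longrightarrow> b \<in> SC' \<Longrightarrow> a * b \<in> induced S (C <#>\<^bsub>G\<^esub> C')" by (rule m1)
    qed
    have part1: "set_prod R SC = SC"
    proof
      show "set_prod R SC \<subseteq> SC"
      proof (rule set_prod_subset)
        show "0 \<in> SC" unfolding SC_def by (rule induced_zero)
        show "\<And>x y. x \<in> SC \<Longrightarrow> y \<in> SC \<Longrightarrow> x + y \<in> SC" by (rule SC_add)
        show "\<And>a b. a \<in> R \<Longrightarrow> b \<in> SC \<Longrightarrow> a * b \<in> SC" using m2 RCC by blast
      qed
      show "SC \<subseteq> set_prod R SC"
        unfolding SC_def
      proof (rule induced_subset)
        show "0 \<in> set_prod R (induced S C)" by (rule set_prod_zero)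
        show "\<And>x y. x \<in> set_prod R (induced S C) \<Longrightarrow> y \<in> set_prod R (induced S C) \<Longrightarrow> x + y \<in> set_prod R (induced S C)"
          by (rule set_prod_add)
        fix g assume g: "g \<in> C"
        have "S g = set_prod (set_prod (S g) (S (inv\<^bsub>G\<^esub> g))) (S g)" using ves g Cc by auto
        also have "\<dots> \<subseteq> set_prod R (induced S C)"
          unfolding R_def SC_def SC'_def
          by (intro set_prod_mono) (auto intro: induced_elem g invC)
        finally show "S g \<subseteq> set_prod R (induced S C)" .
      qed
    qed
    show "set_prod (set_prod (induced S C) (induced S (inv\<^bsub>G Mod N\<^esub> C))) (induced S C) = induced S C
      \<and> enough_idempotents (set_prod (induced S C) (induced S (inv\<^bsub>G Mod N\<^esub> C)))"
    proof
      show "set_prod (set_prod (induced S C) (induced S (inv\<^bsub>G Mod N\<^esub> C))) (induced S C) = induced S C"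
        using part1 unfolding R_def SC_def SC'_def C'_def .
      have C'eq: "inv\<^bsub>G Mod N\<^esub> C = C'" by (simp add: C'_def)
      have R_zero: "0 \<in> R" unfolding R_def by (rule set_prod_zero)
      have R_add: "\<And>x y. x \<in> R \<Longrightarrow> y \<in> R \<Longrightarrow> x + y \<in> R" unfolding R_def by (rule set_prod_add)
      have R_uminus: "\<And>x. x \<in> R \<Longrightarrow> - x \<in> R" unfolding R_def by (rule set_prod_uminus[OF SC_uminus])
      have R_mult: "a * b \<in> R" if a: "a \<in> R" and b: "b \<in> R" for a b
        using a[unfolded R_def]
      proof (induction rule: set_prod_induct)
        case zero then show ?case by (simp add: R_zero)
      next
        case (prod x y)
        have "b \<in> induced S (C <#>\<^bsub>G\<^esub> C')" using b RCC by blast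
        then have "y * b \<in> SC'" by (rule m3[OF prod(2)])
        then have "x * (y * b) \<in> R" unfolding R_def by (rule set_prod_prod[OF prod(1)])
        then show ?case by (simp add: mult.assoc)
      next
        case (add x y) then show ?case by (simp add: distrib_right R_add)
      qed
      have R_join: "\<And>a b. a \<in> R \<Longrightarrow> b \<in> R \<Longrightarrow> idem_join a b \<in> R"
      proof -
        fix a b assume ab: "a \<in> R" "b \<in> R"
        have "a + b + - (a*b) \<in> R" using ab by (intro R_add R_uminus R_mult)
        then show "idem_join a b \<in> R" unfolding idem_join_def by (simp only: diff_conv_add_uminus)
      qed
      define MU where "MU = (\<Union>g\<in>C. M g)"
      define A where "A = join_closure MU"
      have MU_comm: "\<forall>a\<in>MU. \<forall>b\<in>MU. a*b = b*a"
      proof (intro ballI)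
        fix x y assume "x \<in> MU" "y \<in> MU"
        then obtain g h where "g \<in> C" "h \<in> C" "x \<in> M g" "y \<in> M h" unfolding MU_def by blast
        then show "x * y = y * x" by (rule a[OF C])
      qed
      have MU_idem: "\<forall>a\<in>MU. idem a"
      proof
        fix x assume "x \<in> MU"
        then obtain g where g: "g \<in> C" "x \<in> M g" unfolding MU_def by blast
        have "comm_orth_idems (M g)" using coi g(1) Cc by blast
        then show "idem x" using g(2) unfolding comm_orth_idems_def by blast
      qed
      have A_comm: "\<And>x y. x \<in> A \<Longrightarrow> y \<in> A \<Longrightarrow> x*y = y*x" unfolding A_def using jc_comm[OF MU_comm] by blast
      have A_idem: "\<And>x. x \<in> A \<Longrightarrow> idem x" unfolding A_def using jc_idem[OF MU_comm MU_idem] by blast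
      have A_join: "\<And>x y. x \<in> A \<Longrightarrow> y \<in> A \<Longrightarrow> idem_join x y \<in> A" unfolding A_def by (rule join_closure.join)
      have JgA: "join_closure (M g) \<subseteq> A" if "g \<in> C" for g
        unfolding A_def MU_def using that by (intro jc_mono) blast
      have Rg: "set_prod (S g) (S (inv\<^bsub>G\<^esub> g)) \<subseteq> R" if "g \<in> C" for g
        unfolding R_def SC_def SC'_def using that invC by (intro set_prod_mono) (auto intro: induced_elem)
      have MU_R: "MU \<subseteq> R"
      proof
        fix x assume "x \<in> MU"
        then obtain g where g: "g \<in> C" "x \<in> M g" unfolding MU_def by blast
        have "x \<in> join_closure (M g)" using g(2) by (rule join_closure.base)
        then have "x \<in> set_prod (S g) (S (inv\<^bsub>G\<^esub> g))" using lu[of g] g(1) Cc unfolding local_units_def by blast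
        then show "x \<in> R" using Rg[OF g(1)] by blast
      qed
      have A_R: "A \<subseteq> R" unfolding A_def by (rule jc_closed[OF MU_R R_join])
      have lunit: "\<exists>f\<in>A. f * r = r \<and> r * f = r" if gr: "g \<in> C" "r \<in> set_prod (S g) (S (inv\<^bsub>G\<^esub> g))" for g r
      proof -
        obtain f where "f \<in> join_closure (M g)" "f * r = r \<and> r * f = r"
          using lu[of g] gr Cc unfolding local_units_def by blast
        then show ?thesis using JgA[OF gr(1)] by blast
      qed
      obtain g0 where g0: "g0 \<in> C" using cf(3) by blast
      have A_ne: "\<exists>u. u \<in> A" using lunit[OF g0 set_prod_zero] by blast
      define LU where "LU x = (\<exists>u\<in>A. u * x = x)" for x
      define RU where "RU x = (\<exists>u\<in>A. x * u = x)" for x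
      have LU0: "LU 0" and RU0: "RU 0" using A_ne unfolding LU_def RU_def by auto
      have LU_add: "LU (x + y)" if xy: "LU x" "LU y" for x y
      proof -
        obtain u1 u2 where u: "u1 \<in> A" "u2 \<in> A" "u1 * x = x" "u2 * y = y" using xy unfolding LU_def by blast
        have c: "u1 * u2 = u2 * u1" using A_comm u by blast
        have "idem_join u1 u2 * x = x" using join_lunit[OF c u(3)] by blast
        moreover have "idem_join u1 u2 * y = y" using join_lunit[OF c[symmetric] u(4)] by blast
        ultimately show ?thesis unfolding LU_def using A_join[OF u(1,2)] by (metis distrib_left)
      qed
      have RU_add: "RU (x + y)" if xy: "RU x" "RU y" for x y
      proof -
        obtain u1 u2 where u: "u1 \<in> A" "u2 \<in> A" "x * u1 = x" "y * u2 = y" using xy unfolding RU_def by blast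
        have c: "u1 * u2 = u2 * u1" using A_comm u by blast
        have "x * idem_join u1 u2 = x" using join_runit[OF c u(3)] by blast
        moreover have "y * idem_join u1 u2 = y" using join_runit[OF c[symmetric] u(4)] by blast
        ultimately show ?thesis unfolding RU_def using A_join[OF u(1,2)] by (metis distrib_right)
      qed
      have LU_mult: "LU (x * y)" if "LU x" for x y
        using that unfolding LU_def by (metis mult.assoc)
      have RU_mult: "RU (x * y)" if "RU y" for x y
        using that unfolding RU_def by (metis mult.assoc)
      have LU_SC: "LU x" if "x \<in> SC" for x
        using that[unfolded SC_def]
      proof (induction rule: induced_induct)
        case zero then show ?case by (rule LU0)
      next
        case (add x y) then show ?case by (rule LU_add)
      next
        case (elem g s)
        have "s \<in> set_prod (set_prod (S g) (S (inv\<^bsub>G\<^esub> g))) (S g)" using ves[of g] elem Cc by auto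
        then show ?case
        proof (induction rule: set_prod_induct)
          case zero then show ?case by (rule LU0)
        next
          case (add x y) then show ?case by (rule LU_add)
        next
          case (prod p c)
          have "LU p" using lunit[OF elem(1) prod(1)] unfolding LU_def by blast
          then show ?case by (rule LU_mult)
        qed
      qed
      have RU_SC': "RU x" if "x \<in> SC'" for x
        using that[unfolded SC'_def]
      proof (induction rule: induced_induct)
        case zero then show ?case by (rule RU0)
      next
        case (add x y) then show ?case by (rule RU_add)
      next
        case (elem h' t)
        obtain h where h: "h \<in> C" "h' = inv\<^bsub>G\<^esub> h" using invC'[OF elem(1)] by blast
        have hc: "h \<in> carrier G" using h Cc by blast
        have ih: "inv\<^bsub>G\<^esub> h' = h" using h hc by simp
        have "t \<in> set_prod (set_prod (S h') (S h)) (S h')" using ves[of h'] elem C'c ih by auto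
        then show ?case
        proof (induction rule: set_prod_induct)
          case zero then show ?case by (rule RU0)
        next
          case (add x y) then show ?case by (rule RU_add)
        next
          case (prod p c)
          from prod(1) show ?case
          proof (induction rule: set_prod_induct)
            case zero then show ?case by (simp add: RU0)
          next
            case (add x y) then show ?case by (simp add: distrib_right RU_add)
          next
            case (prod a b)
            have "b * c \<in> set_prod (S h) (S (inv\<^bsub>G\<^esub> h))"
              using set_prod_prod[OF prod(2) \<open>c \<in> S h'\<close>] h(2) by simp
            then have "RU (b * c)" using lunit[OF h(1)] unfolding RU_def by blast
            then have "RU (a * (b * c))" by (rule RU_mult)
            then show ?case by (simp add: mult.assoc)
          qed
        qed
      qed
      have twoside: "\<exists>u\<in>A. u * r = r \<and> r * u = r" if "r \<in> R" for r
      proof -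
        have "LU r \<and> RU r" using that[unfolded R_def]
        proof (induction rule: set_prod_induct)
          case zero then show ?case using LU0 RU0 by simp
        next
          case (add x y) then show ?case using LU_add RU_add by blast
        next
          case (prod x y) then show ?case using LU_mult RU_mult LU_SC RU_SC' by blast
        qed
        then obtain u1 u2 where u: "u1 \<in> A" "u2 \<in> A" "u1 * r = r" "r * u2 = r" unfolding LU_def RU_def by blast
        have c: "u1 * u2 = u2 * u1" using A_comm u by blast
        have "idem_join u1 u2 * r = r" using join_lunit[OF c u(3)] by blast
        moreover have "r * idem_join u1 u2 = r" using join_runit[OF c[symmetric] u(4)] by blast
        ultimately show ?thesis using A_join[OF u(1,2)] by blast
      qed
      define MC where "MC = {x\<in>A. \<forall>z\<in>A. idem_le x z \<longrightarrow> z = x}"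
      have MC_A: "MC \<subseteq> A" unfolding MC_def by blast
      have maxex: "\<exists>m\<in>MC. idem_le u m" if "u \<in> A" for u
        using exists_maximal[of A u] A_idem c[OF C] that unfolding MC_def A_def MU_def by blast
      have JMC: "join_closure MC \<subseteq> A" by (rule jc_closed[OF MC_A A_join])
      have "MC \<subseteq> R \<and> comm_orth_idems MC \<and> local_units (join_closure MC) R"
      proof (intro conjI)
        show "MC \<subseteq> R" using MC_A A_R by blast
        show "comm_orth_idems MC" unfolding comm_orth_idems_def
        proof (intro conjI ballI impI)
          fix x assume "x \<in> MC" then show "idem x" using MC_A A_idem by blast
        next
          fix x y assume "x \<in> MC" "y \<in> MC" then show "x * y = y * x" using MC_A A_comm by blast
        next
          fix x y assume "x \<in> MC" "y \<in> MC" "x \<noteq> y"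
          then show "x * y = 0" using b[OF C, of x y] unfolding MC_def A_def MU_def by blast
        qed
        show "local_units (join_closure MC) R" unfolding local_units_def
        proof (intro conjI ballI)
          show "join_closure MC \<subseteq> R" using JMC A_R by blast
        next
          fix e assume "e \<in> join_closure MC" then show "idem e" using JMC A_idem by blast
        next
          fix x y assume "x \<in> join_closure MC" "y \<in> join_closure MC" then show "x * y = y * x" using JMC A_comm by blast
        next
          fix x y assume "x \<in> join_closure MC" "y \<in> join_closure MC" then show "idem_join x y \<in> join_closure MC"
            by (rule join_closure.join)
        next
          fix r assume r: "r \<in> R"
          obtain u where u: "u \<in> A" "u * r = r" "r * u = r" using twoside[OF r] by blast
          obtain m where m: "m \<in> MC" "idem_le u m" using maxex[OF u(1)] by blast
          have um: "u = u * m" "u = m * u" using m(2) unfolding idem_le_def by auto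
          have "m * r = r" by (metis u(2) um(2) mult.assoc)
          moreover have "r * m = r" by (metis u(3) um(1) mult.assoc)
          moreover have "m \<in> join_closure MC" using m(1) by (rule join_closure.base)
          ultimately show "\<exists>f\<in>join_closure MC. f * r = r \<and> r * f = r" by blast
        qed
      qed
      then show "enough_idempotents (set_prod (induced S C) (induced S (inv\<^bsub>G Mod N\<^esub> C)))"
        unfolding enough_idempotents_def R_def SC_def SC'_def C'eq by blast
    qed
  qed
qed

end
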